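(* Let $\mathbb D$ be a commutative ring with identity. For every integer $n\ge1$, $$TS\mathcal A_n\big/\bigl(TS\mathcal A_n\cap\gamma_2(TS\mathcal R_n)\bigr)\cong TS\mathcal A_1=\left\{\begin{pmatrix}1&0\\ \alpha&1\end{pmatrix}:\alpha\in\mathbb D\right\}\cong \mathbb D,$$ and, regarding $S\mathcal R$ as an abstract group, $$S\mathcal A\big/\bigl(S\mathcal A\cap\gamma_2(S\mathcal R)\bigr)=S\mathcal A/\mathcal A_1\cong TS\mathcal A_1\cong\mathbb D,$$ where $\mathbb D$ denotes the additive group of the ring.
   Context: For a commutative ring $\mathbb D$ with identity, the Riordan group $\mathcal R(\mathbb D)$ consists of pairs $(g,f)$ of formal power series $g=\sum_{k\ge0}g_kt^k$, $f=\sum_{k\ge1}f_kt^k$ in $\mathbb D[[t]]$ with $g_0,f_1$ units, identified with the lower triangular matrices $(d_{n,k})$, $d_{n,k}=[t^n]g f^k$; the product is $(g_1,f_1)(g_2,f_2)=(g_1\cdot(g_2\circ f_1),\,f_2\circ f_1)$. $S\mathcal R=S\mathcal R(\mathbb D)$ is the subgroup with $g_0=1$, $f_1=1$. $S\mathcal A$ is the S-Appell subgroup $\{(g,t): g_0=1\}$, and $\mathcal A_1=\{(g,t): g\equiv 1 \pmod{t^2}\}$. For $n\ge0$, $TS\mathcal R_n$ and $TS\mathcal A_n$ are the groups of $(n+1)\times(n+1)$ upper-left truncations $(d_{i,j})_{0\le i,j\le n}$ of elements of $S\mathcal R$ and $S\mathcal A$ respectively. $\gamma_2(G)$ is the (abstract)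 commutator subgroup of $G$. *)

theory Defs
  imports "HOL-Computational_Algebra.Formal_Power_Series" "HOL-Algebra.Algebra"
begin

definition SR_carrier :: "('a::comm_ring_1 fps \<times> 'a fps) set" where
  "SR_carrier = {(g, f). fps_nth g 0 = 1 \<and> fps_nth f 0 = 0 \<and> fps_nth f 1 = 1}"

definition riordan_mult :: "'a::comm_ring_1 fps \<times> 'a fps \<Rightarrow> 'a fps \<times> 'a fps \<Rightarrow> 'a fps \<times> 'a fps" where
  "riordan_mult p q = (fst p * (fst q oo snd p), snd q oo snd p)"

definition SR :: "('a::comm_ring_1 fps \<times> 'a fps) monoid" where
  "SR = \<lparr>carrier = SR_carrier, mult = riordan_mult, one = (1, fps_X)\<rparr>"

definition SA_carrier :: "('a::comm_ring_1 fps \<times> 'a fps) set" where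
  "SA_carrier = {(g, fps_X) | g. fps_nth g 0 = 1}"

definition SA :: "('a::comm_ring_1 fps \<times> 'a fps) monoid" where
  "SA = SR\<lparr>carrier := SA_carrier\<rparr>"

definition A1_carrier :: "('a::comm_ring_1 fps \<times> 'a fps) set" where
  "A1_carrier = {(g, fps_X) | g. fps_nth g 0 = 1 \<and> fps_nth g 1 = 0}"

definition riordan_mat :: "'a::comm_ring_1 fps \<times> 'a fps \<Rightarrow> nat \<Rightarrow> nat \<Rightarrow> 'a" where
  "riordan_mat p i k = fps_nth (fst p * snd p ^ k) i"

text \<open>(n+1)x(n+1) matrices with indices 0..n are represented as functions
  nat => nat => 'a which vanish outside {0..n} x {0..n}.\<close>
definition trunc_mat :: "nat \<Rightarrow> (nat \<Rightarrow> nat \<Rightarrow> 'a::zero) \<Rightarrow> nat \<Rightarrow> nat \<Rightarrow> 'a" where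
  "trunc_mat n M i j = (if i \<le> n \<and> j \<le> n then M i j else 0)"

definition mat_mult_n :: "nat \<Rightarrow> (nat \<Rightarrow> nat \<Rightarrow> 'a::comm_ring_1) \<Rightarrow> (nat \<Rightarrow> nat \<Rightarrow> 'a) \<Rightarrow> nat \<Rightarrow> nat \<Rightarrow> 'a" where
  "mat_mult_n n A B i j = (if i \<le> n \<and> j \<le> n then (\<Sum>k\<le>n. A i k * B k j) else 0)"

definition mat_one_n :: "nat \<Rightarrow> nat \<Rightarrow> nat \<Rightarrow> 'a::comm_ring_1" where
  "mat_one_n n i j = (if i = j \<and> i \<le> n then 1 else 0)"

definition TSR :: "nat \<Rightarrow> (nat \<Rightarrow> nat \<Rightarrow> 'a::comm_ring_1) monoid" where
  "TSR n = \<lparr>carrier = {trunc_mat n (riordan_mat p) | p. p \<in> SR_carrier},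
            mult = mat_mult_n n, one = mat_one_n n\<rparr>"

definition TSA :: "nat \<Rightarrow> (nat \<Rightarrow> nat \<Rightarrow> 'a::comm_ring_1) monoid" where
  "TSA n = (TSR n)\<lparr>carrier := {trunc_mat n (riordan_mat p) | p. p \<in> SA_carrier}\<rparr>"

definition additive_group :: "'a::comm_ring_1 monoid" where
  "additive_group = \<lparr>carrier = UNIV, mult = (+), one = 0\<rparr>"

abbreviation gamma2 :: "('a, 'b) monoid_scheme \<Rightarrow> 'a set" where
  "gamma2 G \<equiv> derived G (carrier G)"

end

theory Submission
  imports Defs
begin
unbundle fps_syntax

lemma product_composition_lemma_cr:
  assumes c0: "c$0 = (0::'a::comm_ring_1)"
    and d0: "d$0 = 0"
  shows "((a oo c) * (b oo d))$n =
    sum (\<lambda>(k,m). a$k * b$m * (c^k * d^m) $ n) {(k,m). k + m \<le> n}"  (is "?l = ?r")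
proof -
  let ?S = "{(k::nat, m::nat). k + m \<le> n}"
  have s: "?S \<subseteq> {0..n} \<times> {0..n}" by (simp add: subset_eq)
  have f: "finite {(k::nat, m::nat). k + m \<le> n}"
    by (auto intro: finite_subset[OF s])
  have "?r = (\<Sum>(k, m) \<in> {(k, m). k + m \<le> n}. \<Sum>j = 0..n. a $ k * b $ m * (c ^ k $ j * d ^ m $ (n - j)))"
    by (simp add: fps_mult_nth sum_distrib_left)
  also have "\<dots> = (\<Sum>i = 0..n. \<Sum>(k,m)\<in>{(k,m). k+m \<le> n}. a $ k * c ^ k $ i * b $ m * d ^ m $ (n-i))"
    unfolding sum.swap [where A = "{0..n}"] by (auto simp add: field_simps intro: sum.cong)
  also have "... = (\<Sum>i = 0..n.
                    \<Sum>q = 0..i. \<Sum>j = 0..n - i. a $ q * c ^ q $ i * (b $ j * d ^ j $ (n - i)))"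
    apply (rule sum.cong [OF refl])
    apply (simp add: sum.cartesian_product mult.assoc)
    apply (rule sum.mono_neutral_right[OF f], force)
    apply clarsimp
    by (metis c0 d0 leI mult_zero_left mult_zero_right startsby_zero_power_prefix)
  also have "\<dots> = ?l"
    by (simp add: fps_mult_nth fps_compose_nth sum_product)
  finally show ?thesis by simp
qed

lemma fps_compose_mult_distrib_cr:
  assumes c0: "c $ 0 = (0::'a::comm_ring_1)"
  shows "(a * b) oo c = (a oo c) * (b oo c)"
proof -
  have l: "((a oo c) * (b oo c))$n = sum (\<lambda>s. sum (\<lambda>i. a$i * b$(s - i) * (c^s) $ n) {0..s}) {0..n}" for n
  unfolding product_composition_lemma_cr[OF c0 c0] power_add[symmetric]
  unfolding sum_pair_less_iff[where a = "\<lambda>k. a$k" and b="\<lambda>m. b$m" and c="\<lambda>s. (c ^ s)$n" and n = n] ..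
  show ?thesis
  proof (clarsimp simp add: fps_eq_iff l)
  show "(a * b oo c) $ n = (\<Sum>s = 0..n. \<Sum>i = 0..s. a $ i * b $ (s - i) * c ^ s $ n)" for n
    by (simp add: fps_compose_nth fps_mult_nth sum_distrib_right)
  qed
qed

lemma fps_compose_power_cr:
  assumes c0: "c$0 = (0::'a::comm_ring_1)"
  shows "(a oo c)^n = a^n oo c"
  by (induction n) (simp_all add: fps_compose_mult_distrib_cr[OF c0])

lemma fps_compose_assoc_cr:
  assumes c0: "c$0 = (0::'a::comm_ring_1)"
    and b0: "b$0 = 0"
  shows "a oo (b oo c) = a oo b oo c" (is "?l = ?r")
proof -
  have "?l$n = ?r$n" for n
  proof -
    have "?l$n = (sum (\<lambda>i. (fps_const (a$i) * b^i) oo c) {0..n})$n"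
      by (simp add: fps_compose_nth fps_compose_power_cr[OF c0] fps_compose_mult_distrib_cr[OF c0] 
        sum_distrib_left mult.assoc fps_sum_nth)
    also have "\<dots> = ((sum (\<lambda>i. fps_const (a$i) * b^i) {0..n}) oo c)$n"
      by (simp add: fps_compose_sum_distrib)
    also have "... = (\<Sum>i = 0..n. \<Sum>j = 0..n. a $ j * (b ^ j $ i * c ^ i $ n))"
      by (simp add: fps_compose_nth fps_sum_nth sum_distrib_right mult.assoc)
    also have "... = (\<Sum>i = 0..n. \<Sum>j = 0..i. a $ j * (b ^ j $ i * c ^ i $ n))"
      by (intro sum.cong [OF refl] sum.mono_neutral_right; simp add: b0 startsby_zero_power_prefix)
    also have "\<dots> = ?r$n"
      by (simp add: fps_compose_nth  sum_distrib_right mult.assoc)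
    finally show ?thesis .
  qed
  then show ?thesis
    by (simp add: fps_eq_iff)
qed

function cinv_c :: "'a::comm_ring_1 fps \<Rightarrow> nat \<Rightarrow> 'a" where
  "cinv_c f n = (if n = 0 then 0 else (if n = 1 then 1 else 0) - (\<Sum>i<n. cinv_c f i * (f^i $ n)))"
  by pat_completeness auto
termination by (relation "measure (\<lambda>(f,n). n)") auto

declare cinv_c.simps[simp del]

lemma cinv_left:
  fixes f :: "'a::comm_ring_1 fps"
  assumes f0: "f$0 = 0" and f1: "f$1 = 1"
  shows "Abs_fps (cinv_c f) oo f = fps_X" "Abs_fps (cinv_c f) $ 0 = 0" "Abs_fps (cinv_c f) $ 1 = 1"
proof -
  show g0: "Abs_fps (cinv_c f) $ 0 = 0" by (simp add: cinv_c.simps)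
  have "cinv_c f 1 = 1" by (subst cinv_c.simps) (simp add: cinv_c.simps)
  then show "Abs_fps (cinv_c f) $ 1 = 1" by simp
  show "Abs_fps (cinv_c f) oo f = fps_X"
  proof (rule fps_ext)
    fix n
    show "(Abs_fps (cinv_c f) oo f) $ n = fps_X $ n"
    proof (cases "n = 0")
      case True thus ?thesis by (simp add: cinv_c.simps)
    next
      case False
      have "(Abs_fps (cinv_c f) oo f) $ n = (\<Sum>i<n. cinv_c f i * (f^i $ n)) + cinv_c f n * (f^n $ n)"
        by (simp add: fps_compose_nth atLeast0AtMost lessThan_Suc_atMost[symmetric])
      also have "f^n $ n = 1" using startsby_zero_power_nth_same[OF f0, of n] f1 by simp
      also have "cinv_c f n = (if n = 1 then 1 else 0) - (\<Sum>i<n. cinv_c f i * (f^i $ n))"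
        using False by (subst cinv_c.simps) simp
      finally show ?thesis by (simp add: fps_X_def)
    qed
  qed
qed

lemma cinv_two_sided:
  fixes f :: "'a::comm_ring_1 fps"
  assumes f0: "f$0 = 0" and f1: "f$1 = 1"
  shows "\<exists>g. g$0 = 0 \<and> g$1 = 1 \<and> g oo f = fps_X \<and> f oo g = fps_X"
proof -
  define g where "g = Abs_fps (cinv_c f)"
  define h where "h = Abs_fps (cinv_c g)"
  have g: "g oo f = fps_X" "g$0 = 0" "g$1 = 1" using cinv_left[OF f0 f1] by (simp_all add: g_def)
  have h: "h oo g = fps_X" using cinv_left[OF g(2,3)] by (simp add: h_def)
  have "h = h oo (g oo f)" by (simp add: g)
  also have "\<dots> = (h oo g) oo f" by (rule fps_compose_assoc_cr[OF f0 g(2)])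
  also have "\<dots> = f" by (simp add: h f0)
  finally have "f oo g = fps_X" using h by simp
  with g show ?thesis by blast
qed

lemma compose_nth_1: "(g oo f) $ 1 = g$1 * (f::'a::comm_ring_1 fps)$1"
  by (simp add: fps_compose_nth)

lemma compose_nth_Suc0: "(g oo f) $ Suc 0 = g$Suc 0 * (f::'a::comm_ring_1 fps)$Suc 0"
  using compose_nth_1 by simp

lemma SR_carrier_iff: "p \<in> SR_carrier \<longleftrightarrow> fst p $ 0 = 1 \<and> snd p $ 0 = 0 \<and> snd p $ 1 = 1"
  by (cases p) (simp add: SR_carrier_def)

lemma SR_simps [simp]: "carrier SR = SR_carrier" "mult SR = riordan_mult" "one SR = (1, fps_X)"
  by (simp_all add: SR_def)

lemma riordan_mult_closed:
  assumes "p \<in> SR_carrier" "q \<in> SR_carrier"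
  shows "riordan_mult p q \<in> SR_carrier"
  using assms by (simp add: SR_carrier_iff riordan_mult_def compose_nth_Suc0)

lemma riordan_mult_assoc:
  assumes "p \<in> SR_carrier" "q \<in> SR_carrier" "r \<in> SR_carrier"
  shows "riordan_mult (riordan_mult p q) r = riordan_mult p (riordan_mult q r)"
proof -
  obtain g1 f1 g2 f2 g3 f3 where pq: "p = (g1,f1)" "q = (g2,f2)" "r = (g3,f3)"
    by (metis prod.exhaust)
  have f: "f1$0 = 0" "f2$0 = 0" using assms pq by (simp_all add: SR_carrier_iff)
  show ?thesis using pq
    by (simp add: riordan_mult_def fps_compose_mult_distrib_cr[OF f(1)]
           fps_compose_assoc_cr[OF f(1) f(2)] mult.assoc)
qed

lemma riordan_left_inv:
  assumes "p \<in> SR_carrier"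
  shows "\<exists>q \<in> SR_carrier. riordan_mult q p = (1, fps_X)"
proof -
  obtain g f where p: "p = (g,f)" by (metis prod.exhaust)
  have gf: "g$0 = 1" "f$0 = 0" "f$1 = 1" using assms p by (simp_all add: SR_carrier_iff)
  obtain f' where f': "f'$0 = 0" "f'$1 = 1" "f oo f' = fps_X"
    using cinv_two_sided[OF gf(2,3)] by blast
  define u where "u = g oo f'"
  have u0: "u $ 0 = 1" using gf by (simp add: u_def)
  define g' where "g' = fps_right_inverse u 1"
  have "u * g' = 1" unfolding g'_def by (rule fps_right_inverse) (simp add: u0)
  hence "g' * u = 1" by (simp add: mult.commute)
  moreover have "g'$0 = 1" by (simp add: g'_def)
  ultimately show ?thesis using f' p
    by (intro bexI[of _ "(g', f')"]) (simp_all add: riordan_mult_def SR_carrier_iff u_def)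
qed

lemma group_SR: "group (SR :: ('a::comm_ring_1 fps \<times> 'a fps) monoid)"
proof (rule groupI)
  show "(\<one>\<^bsub>SR\<^esub> :: 'a fps \<times> 'a fps) \<in> carrier SR" by (simp add: SR_carrier_iff)
next
  fix x :: "'a fps \<times> 'a fps"
  assume "x \<in> carrier SR"
  then show "\<one>\<^bsub>SR\<^esub> \<otimes>\<^bsub>SR\<^esub> x = x"
    by (cases x) (simp add: riordan_mult_def SR_carrier_iff)
qed (auto simp: riordan_mult_closed riordan_mult_assoc riordan_left_inv)

lemma additive_group_simps [simp]: "carrier additive_group = UNIV" "mult additive_group = (+)" "one additive_group = 0"
  by (simp_all add: additive_group_def)

lemma group_additive: "group (additive_group :: 'a::comm_ring_1 monoid)"
proof (rule groupI)
  fix x :: 'a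
  show "\<exists>y\<in>carrier additive_group. y \<otimes>\<^bsub>additive_group\<^esub> x = \<one>\<^bsub>additive_group\<^esub>"
    by (intro bexI[of _ "-x"]) simp_all
qed (simp_all add: add.assoc)

lemma inv_additive [simp]: "inv\<^bsub>(additive_group :: 'a::comm_ring_1 monoid)\<^esub> a = - a"
  by (rule group.inv_equality[OF group_additive]) simp_all

lemma derived_in_kernel_add:
  assumes G: "group G" and h: "h \<in> hom G (additive_group :: 'a::comm_ring_1 monoid)"
  shows "derived G (carrier G) \<subseteq> {x \<in> carrier G. h x = 0}"
proof -
  interpret group G by (rule G)
  interpret gh: group_hom G "additive_group :: 'a monoid" h
    by (intro group_hom.intro group_hom_axioms.intro G group_additive h)
  have sub: "subgroup {x \<in> carrier G. h x = 0} G"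
    using gh.subgroup_kernel by (simp add: kernel_def)
  have hm: "\<And>x y. x \<in> carrier G \<Longrightarrow> y \<in> carrier G \<Longrightarrow> h (x \<otimes>\<^bsub>G\<^esub> y) = h x + h y"
    using h by (simp add: hom_def)
  have h1: "h \<one>\<^bsub>G\<^esub> = 0" using gh.hom_one by simp
  have hinv: "h (inv\<^bsub>G\<^esub> x) = - h x" if "x \<in> carrier G" for x
  proof -
    have "h (inv\<^bsub>G\<^esub> x) + h x = 0" using hm[of "inv\<^bsub>G\<^esub> x" x] that h1 by simp
    thus ?thesis by (simp add: eq_neg_iff_add_eq_0)
  qed
  have "derived_set G (carrier G) \<subseteq> {x \<in> carrier G. h x = 0}"
    by (auto simp: hm hinv)
  then show ?thesis unfolding derived_def by (rule generate_subgroup_incl[OF _ sub])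
qed

lemma phi_SR_hom: "(\<lambda>p. fst p $ 1) \<in> hom SR (additive_group :: 'a::comm_ring_1 monoid)"
  by (auto simp: hom_def riordan_mult_def SR_carrier_iff compose_nth_Suc0 add.commute)

lemma A1_in_derived:
  fixes h :: "'a::comm_ring_1 fps"
  assumes h0: "h$0 = 1" and h1: "h$1 = 0"
  shows "(h, fps_X) \<in> gamma2 (SR :: ('a fps \<times> 'a fps) monoid)"
proof -
  interpret group "SR :: ('a fps \<times> 'a fps) monoid" by (rule group_SR)
  define f where "f = fps_X + (h - 1) * (1 + fps_X)"
  define x where "x = ((1::'a fps), f)"
  define y where "y = ((1::'a fps) + fps_X, (fps_X::'a fps))"
  define z where "z = (h, (fps_X :: 'a fps))"
  have f0: "f$0 = 0" using h0 by (simp add: f_def)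
  have f1: "f$1 = 1" using h0 h1 by (simp add: f_def fps_mult_nth_1)
  have xc: "x \<in> carrier SR" using f0 f1 by (simp add: x_def SR_carrier_iff)
  have yc: "y \<in> carrier SR" by (simp add: y_def SR_carrier_iff)
  have zc: "z \<in> carrier SR" using h0 by (simp add: z_def SR_carrier_iff)
  have e1: "x \<otimes>\<^bsub>SR\<^esub> y = (1 + f, f)"
    by (simp add: x_def y_def riordan_mult_def fps_compose_add_distrib f0)
  have e2: "y \<otimes>\<^bsub>SR\<^esub> x = (1 + fps_X, f)"
    by (simp add: x_def y_def riordan_mult_def)
  have e3: "x \<otimes>\<^bsub>SR\<^esub> y = z \<otimes>\<^bsub>SR\<^esub> (y \<otimes>\<^bsub>SR\<^esub> x)"
    unfolding e1 e2 by (simp add: z_def riordan_mult_def fps_compose_add_distrib f_def algebra_simps)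
  have "x \<otimes>\<^bsub>SR\<^esub> y \<otimes>\<^bsub>SR\<^esub> inv\<^bsub>SR\<^esub> x \<otimes>\<^bsub>SR\<^esub> inv\<^bsub>SR\<^esub> y = z"
    unfolding e3 using xc yc zc by (simp add: m_assoc del: SR_simps)
  then have "z \<in> derived_set SR (carrier SR)" using xc yc by blast
  then show ?thesis unfolding derived_def z_def by (rule generate.incl)
qed

lemma SA_carrier_iff: "p \<in> SA_carrier \<longleftrightarrow> fst p $ 0 = 1 \<and> snd p = fps_X"
  by (cases p) (auto simp: SA_carrier_def)

lemma A1_carrier_iff: "p \<in> A1_carrier \<longleftrightarrow> fst p $ 0 = 1 \<and> fst p $ 1 = 0 \<and> snd p = fps_X"
  by (cases p) (auto simp: A1_carrier_def)

lemma SA_simps [simp]: "carrier SA = SA_carrier" "mult SA = riordan_mult" "one SA = (1, fps_X)"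
  by (simp_all add: SA_def)

lemma SA_sub_SR: "SA_carrier \<subseteq> SR_carrier"
  by (auto simp: SA_carrier_iff SR_carrier_iff)

lemma SA_inter_derived: "carrier (SA :: ('a::comm_ring_1 fps \<times> 'a fps) monoid) \<inter> gamma2 SR = A1_carrier"
proof
  show "carrier (SA :: ('a fps \<times> 'a fps) monoid) \<inter> gamma2 SR \<subseteq> A1_carrier"
    using derived_in_kernel_add[OF group_SR phi_SR_hom]
    by (auto simp: SA_carrier_iff A1_carrier_iff)
next
  show "A1_carrier \<subseteq> carrier (SA :: ('a fps \<times> 'a fps) monoid) \<inter> gamma2 SR"
  proof
    fix p :: "'a fps \<times> 'a fps" assume "p \<in> A1_carrier"
    then obtain h where p: "p = (h, fps_X)" "h$0 = 1" "h$1 = 0" by (cases p) (auto simp: A1_carrier_iff)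
    show "p \<in> carrier SA \<inter> gamma2 SR" using A1_in_derived[OF p(2,3)] p by (simp add: SA_carrier_iff)
  qed
qed

lemma subgroup_SA: "subgroup SA_carrier (SR :: ('a::comm_ring_1 fps \<times> 'a fps) monoid)"
proof -
  interpret group "SR :: ('a fps \<times> 'a fps) monoid" by (rule group_SR)
  show ?thesis
  proof (rule subgroupI)
    show "SA_carrier \<subseteq> carrier (SR :: ('a fps \<times> 'a fps) monoid)" using SA_sub_SR by simp
    show "SA_carrier \<noteq> {}" using SA_carrier_iff[of "(1, fps_X)"] by auto
  next
    fix a b :: "'a fps \<times> 'a fps" assume "a \<in> SA_carrier" "b \<in> SA_carrier"
    then show "a \<otimes>\<^bsub>SR\<^esub> b \<in> SA_carrier" by (simp add: SA_carrier_iff riordan_mult_def)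
  next
    fix a :: "'a fps \<times> 'a fps" assume a: "a \<in> SA_carrier"
    then obtain g where g: "a = (g, fps_X)" "g$0 = 1" by (cases a) (auto simp: SA_carrier_iff)
    define g' where "g' = fps_right_inverse g 1"
    have "g * g' = 1" unfolding g'_def by (rule fps_right_inverse) (simp add: g)
    hence gg: "g' * g = 1" by (simp add: mult.commute)
    have "inv\<^bsub>SR\<^esub> a = (g', fps_X)"
      by (rule inv_equality) (use g gg in \<open>simp_all add: riordan_mult_def SR_carrier_iff g'_def\<close>)
    then show "inv\<^bsub>SR\<^esub> a \<in> SA_carrier" by (simp add: SA_carrier_iff g'_def)
  qed
qed

lemma group_SA: "group (SA :: ('a::comm_ring_1 fps \<times> 'a fps) monoid)"
  unfolding SA_def by (rule subgroup.subgroup_is_group[OF subgroup_SA group_SR])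

lemma phi_SA_hom: "(\<lambda>p. fst p $ 1) \<in> hom SA (additive_group :: 'a::comm_ring_1 monoid)"
  using phi_SR_hom SA_sub_SR by (auto simp: hom_def)

lemma SA_Mod_A1_iso_add: "(SA :: ('a::comm_ring_1 fps \<times> 'a fps) monoid) Mod A1_carrier \<cong> (additive_group :: 'a monoid)"
proof -
  interpret gh: group_hom "SA :: ('a fps \<times> 'a fps) monoid" "additive_group :: 'a monoid" "\<lambda>p. fst p $ 1"
    by (intro group_hom.intro group_hom_axioms.intro group_SA group_additive phi_SA_hom)
  have k: "kernel (SA :: ('a fps \<times> 'a fps) monoid) (additive_group :: 'a monoid) (\<lambda>p. fst p $ 1) = A1_carrier"
    by (auto simp: kernel_def SA_carrier_iff A1_carrier_iff)
  have s: "(\<lambda>p. fst p $ 1) ` carrier (SA :: ('a fps \<times> 'a fps) monoid) = carrier (additive_group :: 'a monoid)"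
  proof -
    have "a \<in> (\<lambda>p. fst p $ 1) ` SA_carrier" for a :: 'a
      by (rule image_eqI[of _ _ "(1 + fps_const a * fps_X, fps_X)"]) (simp_all add: SA_carrier_iff)
    then show ?thesis by auto
  qed
  show ?thesis using gh.FactGroup_iso[OF s] k by simp
qed

lemma pow_nth_zero: "(b::'a::comm_ring_1 fps)$0 = 0 \<Longrightarrow> n < k \<Longrightarrow> (b^k)$n = 0"
  using startsby_zero_power_prefix by blast

lemma mult_power_nth_zero:
  fixes b c :: "'a::comm_ring_1 fps"
  assumes b0: "b$0 = 0" and ij: "i < j"
  shows "(c * b^j) $ i = 0"
  unfolding fps_mult_nth
  by (rule sum.neutral) (use startsby_zero_power_prefix[OF b0, of j] ij in auto)

lemma mult_compose_nth:
  fixes a b c :: "'a::comm_ring_1 fps"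
  assumes b0: "b$0 = 0"
  shows "(c * (a oo b)) $ i = (\<Sum>j=0..i. a$j * (c * b^j) $ i)"
proof -
  have "(c * (a oo b)) $ i = (\<Sum>m=0..i. c$m * (\<Sum>j=0..i-m. a$j * (b^j) $ (i-m)))"
    by (simp add: fps_mult_nth fps_compose_nth)
  also have "\<dots> = (\<Sum>m=0..i. c$m * (\<Sum>j=0..i. a$j * (b^j) $ (i-m)))"
  proof (rule sum.cong[OF refl])
    fix m assume "m \<in> {0..i}"
    have "(\<Sum>j=0..i-m. a$j * (b^j) $ (i-m)) = (\<Sum>j=0..i. a$j * (b^j) $ (i-m))"
      by (rule sum.mono_neutral_left) (auto simp: pow_nth_zero[OF b0])
    then show "c$m * (\<Sum>j=0..i-m. a$j * (b^j) $ (i-m)) = c$m * (\<Sum>j=0..i. a$j * (b^j) $ (i-m))"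
      by simp
  qed
  also have "\<dots> = (\<Sum>j=0..i. \<Sum>m=0..i. a$j * (c$m * (b^j) $ (i-m)))"
    apply (simp add: sum_distrib_left)
    apply (subst sum.swap)
    apply (simp add: mult.left_commute)
    done
  also have "\<dots> = (\<Sum>j=0..i. a$j * (c * b^j) $ i)"
    by (simp add: fps_mult_nth sum_distrib_left)
  finally show ?thesis .
qed

abbreviation Tr :: "nat \<Rightarrow> 'a::comm_ring_1 fps \<times> 'a fps \<Rightarrow> nat \<Rightarrow> nat \<Rightarrow> 'a" where
  "Tr n p \<equiv> trunc_mat n (riordan_mat p)"

lemma Tr_mult:
  assumes p: "p \<in> SR_carrier" and q: "q \<in> SR_carrier"
  shows "Tr n (riordan_mult p q) = mat_mult_n n (Tr n p) (Tr n q)"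
proof (intro ext)
  fix i k
  obtain g1 f1 g2 f2 where pq: "p = (g1,f1)" "q = (g2,f2)" by (metis prod.exhaust)
  have f0: "f1$0 = 0" using p pq by (simp add: SR_carrier_iff)
  show "Tr n (riordan_mult p q) i k = mat_mult_n n (Tr n p) (Tr n q) i k"
  proof (cases "i \<le> n \<and> k \<le> n")
    case False thus ?thesis by (auto simp: trunc_mat_def mat_mult_n_def)
  next
    case True
    have "Tr n (riordan_mult p q) i k = (g1 * ((g2 * f2^k) oo f1)) $ i"
      using True pq by (simp add: trunc_mat_def riordan_mat_def riordan_mult_def
         fps_compose_power_cr[OF f0] fps_compose_mult_distrib_cr[OF f0] mult.assoc)
    also have "\<dots> = (\<Sum>j=0..i. (g2 * f2^k)$j * (g1 * f1^j) $ i)"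
      by (rule mult_compose_nth[OF f0])
    also have "\<dots> = (\<Sum>j\<le>n. (g2 * f2^k)$j * (g1 * f1^j) $ i)"
      by (rule sum.mono_neutral_left) (use True mult_power_nth_zero[OF f0] in auto)
    also have "\<dots> = mat_mult_n n (Tr n p) (Tr n q) i k"
      using True pq by (auto simp: mat_mult_n_def trunc_mat_def riordan_mat_def mult.commute intro!: sum.cong)
    finally show ?thesis .
  qed
qed

lemma Tr_one: "Tr n (1, fps_X) = mat_one_n n"
  by (intro ext) (auto simp: trunc_mat_def riordan_mat_def mat_one_n_def)

lemma Tr_10: "n \<ge> 1 \<Longrightarrow> Tr n p 1 0 = fst p $ 1"
  by (simp add: trunc_mat_def riordan_mat_def)

lemma Tr_10': "n \<ge> 1 \<Longrightarrow> Tr n p (Suc 0) 0 = fst p $ Suc 0"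
  by (simp add: trunc_mat_def riordan_mat_def)

lemma TSR_simps [simp]: "carrier (TSR n) = Tr n ` SR_carrier" "mult (TSR n) = mat_mult_n n" "one (TSR n) = mat_one_n n"
  by (auto simp: TSR_def)

lemma group_TSR: "group (TSR n :: (nat \<Rightarrow> nat \<Rightarrow> 'a::comm_ring_1) monoid)"
proof (rule groupI)
  fix x y :: "nat \<Rightarrow> nat \<Rightarrow> 'a"
  assume "x \<in> carrier (TSR n)" "y \<in> carrier (TSR n)"
  then obtain p q where "p \<in> SR_carrier" "q \<in> SR_carrier" "x = Tr n p" "y = Tr n q" by auto
  then show "x \<otimes>\<^bsub>TSR n\<^esub> y \<in> carrier (TSR n)"
    by (auto simp: Tr_mult[symmetric] intro!: imageI riordan_mult_closed)
next
  show "\<one>\<^bsub>TSR n\<^esub> \<in> (carrier (TSR n) :: (nat \<Rightarrow> nat \<Rightarrow> 'a) set)"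
    by (simp add: Tr_one[symmetric] SR_carrier_iff)
next
  fix x y z :: "nat \<Rightarrow> nat \<Rightarrow> 'a"
  assume "x \<in> carrier (TSR n)" "y \<in> carrier (TSR n)" "z \<in> carrier (TSR n)"
  then obtain p q r where "p \<in> SR_carrier" "q \<in> SR_carrier" "r \<in> SR_carrier" "x = Tr n p" "y = Tr n q" "z = Tr n r" by auto
  then show "x \<otimes>\<^bsub>TSR n\<^esub> y \<otimes>\<^bsub>TSR n\<^esub> z = x \<otimes>\<^bsub>TSR n\<^esub> (y \<otimes>\<^bsub>TSR n\<^esub> z)"
    by (simp add: Tr_mult[symmetric] riordan_mult_closed riordan_mult_assoc)
next
  fix x :: "nat \<Rightarrow> nat \<Rightarrow> 'a"
  assume "x \<in> carrier (TSR n)"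
  then obtain p where p: "p \<in> SR_carrier" "x = Tr n p" by auto
  have one: "((1::'a fps), (fps_X::'a fps)) \<in> SR_carrier" by (simp add: SR_carrier_iff)
  have "riordan_mult (1, fps_X) p = p" by (cases p) (simp add: riordan_mult_def)
  then show "\<one>\<^bsub>TSR n\<^esub> \<otimes>\<^bsub>TSR n\<^esub> x = x"
    using p one by (simp add: Tr_one[symmetric] Tr_mult[symmetric])
  obtain q where q: "q \<in> SR_carrier" "riordan_mult q p = (1, fps_X)" using riordan_left_inv[OF p(1)] by blast
  show "\<exists>y\<in>carrier (TSR n). y \<otimes>\<^bsub>TSR n\<^esub> x = \<one>\<^bsub>TSR n\<^esub>"
    using p q by (intro bexI[of _ "Tr n q"]) (simp_all add: Tr_mult[symmetric] Tr_one[symmetric])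
qed

lemma Tr_hom: "Tr n \<in> hom (SR :: ('a::comm_ring_1 fps \<times> 'a fps) monoid) (TSR n)"
  by (auto simp: hom_def Tr_mult)

lemma Tr_group_hom: "group_hom (SR :: ('a::comm_ring_1 fps \<times> 'a fps) monoid) (TSR n) (Tr n)"
  by (intro group_hom.intro group_hom_axioms.intro group_SR group_TSR Tr_hom)

lemma gamma2_TSR: "gamma2 (TSR n :: (nat \<Rightarrow> nat \<Rightarrow> 'a::comm_ring_1) monoid) = Tr n ` gamma2 (SR :: ('a fps \<times> 'a fps) monoid)"
  using group_hom.derived_img[OF Tr_group_hom[where n=n and 'a='a], of "carrier SR"] by simp

lemma gamma2_TSR': "derived (TSR n :: (nat \<Rightarrow> nat \<Rightarrow> 'a::comm_ring_1) monoid) (Tr n ` SR_carrier) = Tr n ` derived (SR :: ('a fps \<times> 'a fps) monoid) SR_carrier"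
  using gamma2_TSR[where n=n and 'a='a] by simp

lemma TSA_eq: "TSA n = (TSR n)\<lparr>carrier := Tr n ` SA_carrier\<rparr>"
proof -
  have "{trunc_mat n (riordan_mat p) | p. p \<in> SA_carrier} = Tr n ` (SA_carrier :: ('a fps \<times> 'a fps) set)"
    by auto
  then show ?thesis by (simp add: TSA_def)
qed

lemma TSA_simps [simp]: "carrier (TSA n) = Tr n ` SA_carrier" "mult (TSA n) = mat_mult_n n" "one (TSA n) = mat_one_n n"
  by (simp_all add: TSA_eq)

lemma group_TSA: "group (TSA n :: (nat \<Rightarrow> nat \<Rightarrow> 'a::comm_ring_1) monoid)"
proof -
  have "subgroup (Tr n ` SA_carrier) (TSR n :: (nat \<Rightarrow> nat \<Rightarrow> 'a) monoid)"
    using group_hom.subgroup_img_is_subgroup[OF Tr_group_hom subgroup_SA] .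
  then show ?thesis unfolding TSA_eq by (rule subgroup.subgroup_is_group[OF _ group_TSR])
qed

lemma psi_hom:
  assumes "n \<ge> 1"
  shows "(\<lambda>M. M 1 0) \<in> hom (TSA n :: (nat \<Rightarrow> nat \<Rightarrow> 'a::comm_ring_1) monoid) (additive_group :: 'a monoid)"
proof -
  have "Tr n (riordan_mult p q) 1 0 = Tr n p 1 0 + Tr n q 1 0" if "p \<in> SA_carrier" "q \<in> SA_carrier" for p q :: "'a fps \<times> 'a fps"
    using that phi_SR_hom SA_sub_SR assms by (auto simp: Tr_10 Tr_10' hom_def)
  note eq = this
  show ?thesis unfolding hom_def
  proof (intro CollectI conjI ballI)
    show "(\<lambda>M. M 1 0) \<in> carrier (TSA n :: (nat \<Rightarrow> nat \<Rightarrow> 'a) monoid) \<rightarrow> carrier (additive_group :: 'a monoid)"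
      by simp
  next
    fix M N assume "M \<in> carrier (TSA n :: (nat \<Rightarrow> nat \<Rightarrow> 'a) monoid)" "N \<in> carrier (TSA n :: (nat \<Rightarrow> nat \<Rightarrow> 'a) monoid)"
    then obtain p q where pq: "p \<in> SA_carrier" "q \<in> SA_carrier" "M = Tr n p" "N = Tr n q" by auto
    have "M \<otimes>\<^bsub>TSA n\<^esub> N = Tr n (riordan_mult p q)"
      using pq Tr_mult[OF subsetD[OF SA_sub_SR pq(1)] subsetD[OF SA_sub_SR pq(2)]] by simp
    then show "(M \<otimes>\<^bsub>TSA n\<^esub> N) 1 0 = M 1 0 \<otimes>\<^bsub>additive_group\<^esub> N 1 0"
      using eq[OF pq(1,2)] pq by simp
  qed
qed

lemma TSA_Mod_iso_add:
  assumes n: "n \<ge> 1"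
  shows "(TSA n :: (nat \<Rightarrow> nat \<Rightarrow> 'a::comm_ring_1) monoid) Mod (carrier (TSA n) \<inter> gamma2 (TSR n)) \<cong> (additive_group :: 'a monoid)"
proof -
  interpret gh: group_hom "TSA n :: (nat \<Rightarrow> nat \<Rightarrow> 'a) monoid" "additive_group :: 'a monoid" "\<lambda>M. M 1 0"
    by (intro group_hom.intro group_hom_axioms.intro group_TSA group_additive psi_hom n)
  have k: "kernel (TSA n :: (nat \<Rightarrow> nat \<Rightarrow> 'a) monoid) (additive_group :: 'a monoid) (\<lambda>M. M 1 0)
        = carrier (TSA n) \<inter> gamma2 (TSR n)"
  proof
    show "kernel (TSA n :: (nat \<Rightarrow> nat \<Rightarrow> 'a) monoid) (additive_group :: 'a monoid) (\<lambda>M. M 1 0)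
        \<subseteq> carrier (TSA n) \<inter> gamma2 (TSR n)"
    proof
      fix M assume "M \<in> kernel (TSA n :: (nat \<Rightarrow> nat \<Rightarrow> 'a) monoid) (additive_group :: 'a monoid) (\<lambda>M. M 1 0)"
      then obtain p where p: "p \<in> SA_carrier" "M = Tr n p" "Tr n p 1 0 = 0" by (auto simp: kernel_def)
      have "p \<in> A1_carrier" using p n by (simp add: Tr_10 Tr_10' SA_carrier_iff A1_carrier_iff)
      then have "p \<in> gamma2 SR" using SA_inter_derived by blast
      then show "M \<in> carrier (TSA n) \<inter> gamma2 (TSR n)" using p by (simp add: gamma2_TSR')
    qed
  next
    show "carrier (TSA n) \<inter> gamma2 (TSR n) \<subseteq> kernel (TSA n :: (nat \<Rightarrow> nat \<Rightarrow> 'a) monoid) (additive_group :: 'a monoid) (\<lambda>M. M 1 0)"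
    proof
      fix M assume M: "M \<in> carrier (TSA n :: (nat \<Rightarrow> nat \<Rightarrow> 'a) monoid) \<inter> gamma2 (TSR n)"
      have "M \<in> gamma2 (TSR n :: (nat \<Rightarrow> nat \<Rightarrow> 'a) monoid)" using M by blast
      then have "M \<in> Tr n ` gamma2 (SR :: ('a fps \<times> 'a fps) monoid)" by (simp only: gamma2_TSR)
      then obtain q where q: "q \<in> gamma2 (SR :: ('a fps \<times> 'a fps) monoid)" "M = Tr n q" by blast
      have "fst q $ 1 = 0" using derived_in_kernel_add[OF group_SR phi_SR_hom] q(1) by auto
      then show "M \<in> kernel (TSA n :: (nat \<Rightarrow> nat \<Rightarrow> 'a) monoid) (additive_group :: 'a monoid) (\<lambda>M. M 1 0)"
        using M q n by (simp add: kernel_def Tr_10 Tr_10')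
    qed
  qed
  have s: "(\<lambda>M. M 1 0) ` carrier (TSA n :: (nat \<Rightarrow> nat \<Rightarrow> 'a) monoid) = carrier (additive_group :: 'a monoid)"
  proof -
    have "a \<in> (\<lambda>M. M 1 0) ` Tr n ` SA_carrier" for a :: 'a
      by (rule image_eqI[of _ _ "Tr n (1 + fps_const a * fps_X, fps_X)"]) (simp_all add: SA_carrier_iff Tr_10'[OF n])
    then show ?thesis by auto
  qed
  show ?thesis using gh.FactGroup_iso[OF s] k by simp
qed

definition Emat :: "'a::comm_ring_1 \<Rightarrow> nat \<Rightarrow> nat \<Rightarrow> 'a" where
  "Emat \<alpha> = (\<lambda>i j. if i = 0 \<and> j = 0 then 1 else if i = 1 \<and> j = 0 then \<alpha>
                    else if i = 1 \<and> j = 1 then 1 else 0)"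

lemma Tr1_SA:
  assumes "p \<in> SA_carrier"
  shows "Tr 1 p = Emat (fst p $ 1)"
proof (intro ext)
  fix i j
  obtain g where p: "p = (g, fps_X)" "g$0 = 1" using assms by (cases p) (auto simp: SA_carrier_iff)
  show "Tr 1 p i j = Emat (fst p $ 1) i j"
  proof (cases "i \<le> 1 \<and> j \<le> 1")
    case False thus ?thesis by (auto simp: trunc_mat_def Emat_def)
  next
    case True
    then have "i = 0 \<or> i = 1" "j = 0 \<or> j = 1" by auto
    then show ?thesis using p
      by (auto simp: trunc_mat_def Emat_def riordan_mat_def)
  qed
qed

lemma carrier_TSA1: "carrier (TSA 1 :: (nat \<Rightarrow> nat \<Rightarrow> 'a::comm_ring_1) monoid) = {Emat \<alpha> | \<alpha>. True}"
proof -
  have "Emat a \<in> Tr 1 ` SA_carrier" for a :: 'a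
  proof (rule image_eqI[of _ _ "(1 + fps_const a * fps_X, fps_X)"])
    show "(1 + fps_const a * fps_X, fps_X) \<in> SA_carrier" by (simp add: SA_carrier_iff)
    then show "Emat a = Tr 1 (1 + fps_const a * fps_X, fps_X)" using Tr1_SA by fastforce
  qed
  moreover have "Tr 1 p \<in> {Emat \<alpha> | \<alpha>. True}" if "p \<in> SA_carrier" for p :: "'a fps \<times> 'a fps"
    using Tr1_SA[OF that] by blast
  ultimately show ?thesis by (auto simp del: One_nat_def)
qed

lemma Emat_10: "Emat a 1 0 = a"
  by (simp add: Emat_def)


lemma Emat_iso: "Emat \<in> iso (additive_group :: 'a::comm_ring_1 monoid) (TSA 1)"
proof -
  have mult: "Emat (a + b) = mat_mult_n 1 (Emat a) (Emat b)" for a b :: 'a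
  proof -
    define pa where "pa = ((1::'a fps) + fps_const a * fps_X, (fps_X :: 'a fps))"
    define pb where "pb = ((1::'a fps) + fps_const b * fps_X, (fps_X :: 'a fps))"
    have c: "pa \<in> SA_carrier" "pb \<in> SA_carrier" by (simp_all add: pa_def pb_def SA_carrier_iff)
    have c': "riordan_mult pa pb \<in> SA_carrier"
      using subgroup.m_closed[OF subgroup_SA c] by (simp only: SR_simps)
    have "mat_mult_n 1 (Emat a) (Emat b) = mat_mult_n 1 (Tr 1 pa) (Tr 1 pb)"
      using Tr1_SA[OF c(1)] Tr1_SA[OF c(2)] by (simp add: pa_def pb_def)
    also have "\<dots> = Tr 1 (riordan_mult pa pb)"
      using Tr_mult[OF subsetD[OF SA_sub_SR c(1)] subsetD[OF SA_sub_SR c(2)]] by simp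
    also have "\<dots> = Emat (fst (riordan_mult pa pb) $ 1)" by (rule Tr1_SA[OF c'])
    also have "fst (riordan_mult pa pb) $ 1 = a + b"
      by (simp add: pa_def pb_def riordan_mult_def)
    finally show ?thesis by simp
  qed
  have inj: "inj (Emat :: 'a \<Rightarrow> nat \<Rightarrow> nat \<Rightarrow> 'a)" 
  proof (rule injI)
    fix x y :: 'a assume "Emat x = Emat y"
    then show "x = y" by (metis Emat_10)
  qed
  have hom: "Emat \<in> hom (additive_group :: 'a monoid) (TSA 1)"
    unfolding hom_def
  proof (intro CollectI conjI ballI)
    show "Emat \<in> carrier (additive_group :: 'a monoid) \<rightarrow> carrier (TSA 1)"
      unfolding carrier_TSA1 by auto
  next
    fix x y :: 'a
    show "Emat (x \<otimes>\<^bsub>additive_group\<^esub> y) = Emat x \<otimes>\<^bsub>TSA 1\<^esub> Emat y"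
      using mult by simp
  qed
  have bij: "bij_betw Emat (carrier (additive_group :: 'a monoid)) (carrier (TSA 1))"
    unfolding bij_betw_def carrier_TSA1 using inj by auto
  show ?thesis unfolding iso_def using hom bij by blast
qed

lemma add_iso_TSA1: "(additive_group :: 'a::comm_ring_1 monoid) \<cong> (TSA 1 :: (nat \<Rightarrow> nat \<Rightarrow> 'a) monoid)"
  using Emat_iso unfolding is_iso_def by blast

lemma TSA1_iso_add: "(TSA 1 :: (nat \<Rightarrow> nat \<Rightarrow> 'a::comm_ring_1) monoid) \<cong> (additive_group :: 'a monoid)"
  by (rule group.iso_sym[OF group_additive add_iso_TSA1])

theorem corollary2:
  fixes n :: nat
  assumes "n \<ge> 1"
  shows "((TSA n :: (nat \<Rightarrow> nat \<Rightarrow> 'a::comm_ring_1) monoid)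
            Mod (carrier (TSA n) \<inter> gamma2 (TSR n)) \<cong> (TSA 1 :: (nat \<Rightarrow> nat \<Rightarrow> 'a) monoid))
    \<and> (carrier (TSA 1 :: (nat \<Rightarrow> nat \<Rightarrow> 'a) monoid) =
           {(\<lambda>i j. if i = 0 \<and> j = 0 then 1 else if i = 1 \<and> j = 0 then \<alpha>
                    else if i = 1 \<and> j = 1 then 1 else 0) | \<alpha>. True})
    \<and> ((TSA 1 :: (nat \<Rightarrow> nat \<Rightarrow> 'a) monoid) \<cong> (additive_group :: 'a monoid))
    \<and> ((SA :: ('a fps \<times> 'a fps) monoid) Mod (carrier SA \<inter> gamma2 SR)
           = (SA :: ('a fps \<times> 'a fps) monoid) Mod A1_carrier)
    \<and> ((SA :: ('a fps \<times> 'a fps) monoid) Mod A1_carrier \<cong> (TSA 1 :: (nat \<Rightarrow> nat \<Rightarrow> 'a) monoid))"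
proof (intro conjI)
  show "(TSA n :: (nat \<Rightarrow> nat \<Rightarrow> 'a) monoid) Mod (carrier (TSA n) \<inter> gamma2 (TSR n)) \<cong> (TSA 1 :: (nat \<Rightarrow> nat \<Rightarrow> 'a) monoid)"
    by (rule iso_trans[OF TSA_Mod_iso_add[OF assms] add_iso_TSA1])
  show "carrier (TSA 1 :: (nat \<Rightarrow> nat \<Rightarrow> 'a) monoid) =
           {(\<lambda>i j. if i = 0 \<and> j = 0 then 1 else if i = 1 \<and> j = 0 then \<alpha>
                    else if i = 1 \<and> j = 1 then 1 else 0) | \<alpha>. True}"
    using carrier_TSA1 unfolding Emat_def .
  show "(TSA 1 :: (nat \<Rightarrow> nat \<Rightarrow> 'a) monoid) \<cong> (additive_group :: 'a monoid)"
    by (rule TSA1_iso_add)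
  show "(SA :: ('a fps \<times> 'a fps) monoid) Mod (carrier SA \<inter> gamma2 SR) = SA Mod A1_carrier"
    by (simp only: SA_inter_derived)
  show "(SA :: ('a fps \<times> 'a fps) monoid) Mod A1_carrier \<cong> (TSA 1 :: (nat \<Rightarrow> nat \<Rightarrow> 'a) monoid)"
    by (rule iso_trans[OF SA_Mod_A1_iso_add add_iso_TSA1])
qed

end
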